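(* Let $P$ be a finite poset and $q$ a prime power. Suppose that $La(n,P)=(1+o(1))\Sigma(n,e(P))$ as $n\to\infty$, and that $e_q(P)=e(P)$. Then $La_q(n,P)=(1+o(1))\Sigma_q(n,e_q(P))$ as $n\to\infty$.
   Context: A family $\mathcal{F}$ of subsets of $[n]$ (resp. of subspaces of $\mathbb{F}_q^n$) weakly contains a poset $P$ if there is an injection $f:P\to\mathcal{F}$ such that $x<_P y$ implies $f(x)\subsetneq f(y)$; otherwise $\mathcal{F}$ is $P$-free. $La(n,P)$ is the maximum size of a $P$-free family $\mathcal{F}\subseteq 2^{[n]}$, and $La_q(n,P)$ the maximum size of a $P$-free family of subspaces of $\mathbb{F}_q^n$. Level $i$ of $2^{[n]}$ is the family of $i$-element subsets; level $i$ of the subspace poset is the set of $i$-dimensional subspaces. $e(P)$ is the largest integer $m$ such that for every $n$, every family in $2^{[n]}$ consisting of $m$ consecutive levels is $P$-free; $e_q(P)$ is the largest integer $m$ such that the middle $m$ levels of the subspace poset of $\mathbb{F}_q^n$ do not contain $P$ for any $n$. $\Sigma(n,k)=\sum_{i=1}^k\binom{n}{\lfloor\frac{n-k}{2}\rfloor+i}$ and $\Sigma_q(n,k)=\sum_{i=1}^k{n \brack \lfloor\frac{n-k}{2}\rfloor+i}_q$, with ${n\brack j}_q$ the Gaussian binomial coefficient (number of $j$-dimensional subspaces of $\mathbb{F}_q^n$). *)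

theory Defs
  imports Main "HOL-Library.Landau_Symbols" "HOL-Library.Function_Algebras"
begin

text \<open>A finite poset is given as a finite carrier set P of an ordered type 'p
  (every finite poset is isomorphic to such a set).\<close>

definition weakly_contains :: "'p::order set \<Rightarrow> 'b set set \<Rightarrow> bool" where
  "weakly_contains P F \<longleftrightarrow>
     (\<exists>f. inj_on f P \<and> f ` P \<subseteq> F \<and> (\<forall>x\<in>P. \<forall>y\<in>P. x < y \<longrightarrow> f x \<subset> f y))"

definition P_free :: "'p::order set \<Rightarrow> 'b set set \<Rightarrow> bool" where
  "P_free P F \<longleftrightarrow> \<not> weakly_contains P F"

definition La :: "'p::order set \<Rightarrow> nat \<Rightarrow> nat" where
  "La P n = Max {card F | F. F \<subseteq> Pow {..<n} \<and> P_free P F}"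

definition bool_levels :: "nat \<Rightarrow> nat \<Rightarrow> nat \<Rightarrow> nat set set" where
  "bool_levels n i m = {A. A \<subseteq> {..<n} \<and> i \<le> card A \<and> card A < i + m}"

definition eP :: "'p::order set \<Rightarrow> nat" where
  "eP P = (GREATEST m. \<forall>n i. i + m \<le> n + 1 \<longrightarrow> P_free P (bool_levels n i m))"

definition Sigma_b :: "nat \<Rightarrow> nat \<Rightarrow> real" where
  "Sigma_b n k = (\<Sum>i=1..k. let j = (int n - int k) div 2 + int i in
                   if 0 \<le> j then real (n choose nat j) else 0)"

text \<open>F^n is represented as the functions nat => F vanishing outside {..<n}.\<close>

definition fscale :: "'f::field \<Rightarrow> (nat \<Rightarrow> 'f) \<Rightarrow> (nat \<Rightarrow> 'f)" where
  "fscale c v = (\<lambda>i. c * v i)"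

definition Fn :: "nat \<Rightarrow> (nat \<Rightarrow> 'f::field) set" where
  "Fn n = {v. \<forall>i\<ge>n. v i = 0}"

definition subspaces :: "nat \<Rightarrow> (nat \<Rightarrow> 'f::field) set set" where
  "subspaces n = {V. V \<subseteq> Fn n \<and> module.subspace fscale V}"

definition sdim :: "(nat \<Rightarrow> 'f::field) set \<Rightarrow> nat" where
  "sdim V = vector_space.dim fscale V"

definition La_q :: "'p::order set \<Rightarrow> nat \<Rightarrow> 'f::{field,finite} itself \<Rightarrow> nat" where
  "La_q P n _ = Max {card F | F. F \<subseteq> (subspaces n :: (nat \<Rightarrow> 'f) set set) \<and> P_free P F}"

definition mid_levels :: "nat \<Rightarrow> nat \<Rightarrow> (nat \<Rightarrow> 'f::field) set set" where
  "mid_levels n m = {V \<in> subspaces n. (int n - int m) div 2 < int (sdim V) \<and>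
                                       int (sdim V) \<le> (int n - int m) div 2 + int m}"

definition eqP :: "'p::order set \<Rightarrow> 'f::{field,finite} itself \<Rightarrow> nat" where
  "eqP P _ = (GREATEST m. \<forall>n. P_free P (mid_levels n m :: (nat \<Rightarrow> 'f) set set))"

definition gauss_binom :: "real \<Rightarrow> nat \<Rightarrow> nat \<Rightarrow> real" where
  "gauss_binom q n j = (if j \<le> n then (\<Prod>i<j. (q ^ (n - i) - 1) / (q ^ (i + 1) - 1)) else 0)"

definition Sigma_q :: "real \<Rightarrow> nat \<Rightarrow> nat \<Rightarrow> real" where
  "Sigma_q q n k = (\<Sum>i=1..k. let j = (int n - int k) div 2 + int i in
                   if 0 \<le> j then gauss_binom q n (nat j) else 0)"

end

theory Submission
  imports Defs "HOL-Library.FuncSet"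
begin


interpretation fs: vector_space "fscale :: 'f::field \<Rightarrow> (nat \<Rightarrow> 'f) \<Rightarrow> (nat \<Rightarrow> 'f)"
  by unfold_locales (auto simp: fscale_def algebra_simps)

lemma subspaces_alt: "subspaces n = {V. V \<subseteq> Fn n \<and> fs.subspace V}"
  by (simp add: subspaces_def)
lemma sdim_alt: "sdim V = fs.dim V" by (simp add: sdim_def)

lemma card_span_indep:
  fixes X :: "(nat \<Rightarrow> 'f::{field,finite}) set"
  assumes "finite X" "fs.independent X"
  shows "card (fs.span X) = card (UNIV::'f set) ^ card X"
proof -
  let ?g = "\<lambda>u. \<Sum>v\<in>X. fscale (u v) v"
  have sp: "fs.span X = ?g ` (X \<rightarrow>\<^sub>E UNIV)"
  proof -
    have "fs.span X = range ?g" using fs.span_finite[OF assms(1)] by simp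
    also have "\<dots> = ?g ` (X \<rightarrow>\<^sub>E UNIV)"
    proof
      show "range ?g \<subseteq> ?g ` (X \<rightarrow>\<^sub>E UNIV)"
      proof
        fix y assume "y \<in> range ?g"
        then obtain u where y: "y = ?g u" by auto
        have "y = ?g (restrict u X)" unfolding y by (intro sum.cong) auto
        moreover have "restrict u X \<in> X \<rightarrow>\<^sub>E UNIV" by simp
        ultimately show "y \<in> ?g ` (X \<rightarrow>\<^sub>E UNIV)" by blast
      qed
    qed auto
    finally show ?thesis .
  qed
  have inj: "inj_on ?g (X \<rightarrow>\<^sub>E UNIV)"
  proof
    fix u1 u2 assume u: "u1 \<in> X \<rightarrow>\<^sub>E UNIV" "u2 \<in> X \<rightarrow>\<^sub>E UNIV" and eq: "?g u1 = ?g u2"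
    have "(\<Sum>v\<in>X. fscale (u1 v - u2 v) v) = ?g u1 - ?g u2"
      by (simp add: fs.scale_left_diff_distrib sum_subtractf)
    also have "\<dots> = 0" using eq by simp
    finally have z: "(\<Sum>v\<in>X. fscale (u1 v - u2 v) v) = 0" .
    have "\<forall>v\<in>X. u1 v - u2 v = 0"
      using fs.independentD[OF assms(2) assms(1) subset_refl z] by blast
    then show "u1 = u2" using u by (intro extensionalityI[of _ X]) (auto simp: PiE_def)
  qed
  have "card (fs.span X) = card (X \<rightarrow>\<^sub>E (UNIV::'f set))"
    by (simp add: sp card_image[OF inj])
  also have "\<dots> = card (UNIV::'f set) ^ card X" using assms(1) by (simp add: card_PiE)
  finally show ?thesis .
qed

lemma card_field_ge2: "2 \<le> card (UNIV::'f::{field,finite} set)"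
proof -
  have "card {0::'f, 1} = 2" by simp
  moreover have "card {0::'f, 1} \<le> card (UNIV::'f set)" by (rule card_mono) auto
  ultimately show ?thesis by simp
qed

lemma card_subspace:
  fixes V :: "(nat \<Rightarrow> 'f::{field,finite}) set"
  assumes "finite V" "fs.subspace V"
  shows "card V = card (UNIV::'f set) ^ fs.dim V"
proof -
  obtain B where B: "B \<subseteq> V" "fs.independent B" "V \<subseteq> fs.span B" "card B = fs.dim V"
    using fs.basis_exists by blast
  have "fs.span B \<subseteq> V" using B(1) assms(2) by (rule fs.span_minimal)
  then have "fs.span B = V" using B(3) by blast
  moreover have "finite B" using B(1) assms(1) finite_subset by blast
  ultimately show ?thesis using card_span_indep[of B] B by simp
qed

lemma Fn_image: "Fn n = (\<lambda>g i. if i < n then g i else 0) ` ({..<n} \<rightarrow>\<^sub>E (UNIV::'f::field set))"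
proof
  show "Fn n \<subseteq> (\<lambda>g i. if i < n then g i else 0) ` ({..<n} \<rightarrow>\<^sub>E (UNIV::'f set))"
  proof
    fix v :: "nat \<Rightarrow> 'f" assume "v \<in> Fn n"
    then have "v = (\<lambda>i. if i < n then restrict v {..<n} i else 0)"
      by (auto simp: Fn_def fun_eq_iff)
    moreover have "restrict v {..<n} \<in> {..<n} \<rightarrow>\<^sub>E UNIV" by simp
    ultimately show "v \<in> (\<lambda>g i. if i < n then g i else 0) ` ({..<n} \<rightarrow>\<^sub>E (UNIV::'f set))"
      by blast
  qed
next show "(\<lambda>g i. if i < n then g i else 0) ` ({..<n} \<rightarrow>\<^sub>E (UNIV::'f set)) \<subseteq> Fn n" by (simp add: Fn_def image_subset_iff) qed

lemma card_Fn: "card (Fn n :: (nat \<Rightarrow> 'f::{field,finite}) set) = card (UNIV::'f set) ^ n"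
proof -
  have "inj_on (\<lambda>g i. if i < n then g i else (0::'f)) ({..<n} \<rightarrow>\<^sub>E UNIV)"
  proof
    fix g h :: "nat \<Rightarrow> 'f"
    assume gh: "g \<in> {..<n} \<rightarrow>\<^sub>E UNIV" "h \<in> {..<n} \<rightarrow>\<^sub>E UNIV"
      and eq: "(\<lambda>i. if i < n then g i else 0) = (\<lambda>i. if i < n then h i else 0)"
    have "\<forall>i<n. g i = h i"
    proof (intro allI impI)
      fix i assume "i < n"
      then show "g i = h i" using fun_cong[OF eq, of i] by simp
    qed
    then show "g = h" using gh by (intro extensionalityI[of _ "{..<n}"]) (auto simp: PiE_def)
  qed
  then have "card (Fn n :: (nat \<Rightarrow> 'f) set) = card ({..<n} \<rightarrow>\<^sub>E (UNIV::'f set))"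
    by (simp add: Fn_image card_image)
  also have "\<dots> = card (UNIV::'f set) ^ n" by (simp add: card_PiE)
  finally show ?thesis .
qed

lemma finite_Fn: "finite (Fn n :: (nat \<Rightarrow> 'f::{field,finite}) set)"
  unfolding Fn_image by (intro finite_imageI finite_PiE) auto

lemma subspace_Fn: "fs.subspace (Fn n)"
  by (auto simp: fs.subspace_def Fn_def fscale_def)

lemma dim_Fn: "fs.dim (Fn n :: (nat \<Rightarrow> 'f::{field,finite}) set) = n"
proof -
  have "card (UNIV::'f set) ^ fs.dim (Fn n :: (nat \<Rightarrow> 'f) set) = card (UNIV::'f set) ^ n"
    using card_subspace[OF finite_Fn subspace_Fn, where 'f='f] card_Fn[where 'f='f, of n] by simp
  moreover have "1 < card (UNIV::'f set)" using card_field_ge2[where 'f='f] by simp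
  ultimately show ?thesis by (metis power_inject_exp)
qed

lemma finite_subspaces: "finite (subspaces n :: (nat \<Rightarrow> 'f::{field,finite}) set set)"
proof -
  have "subspaces n \<subseteq> Pow (Fn n :: (nat \<Rightarrow> 'f) set)" by (auto simp: subspaces_def)
  then show ?thesis using finite_Fn finite_subset by blast
qed



lemma count_ext:
  fixes U Wz :: "(nat \<Rightarrow> 'f::{field,finite}) set" and I :: "nat set"
  assumes U: "fs.subspace U" "finite U" and Wz: "Wz \<subseteq> U" "fs.independent Wz" and I: "finite I"
  shows "card {c \<in> I \<rightarrow>\<^sub>E U. inj_on c I \<and> c ` I \<inter> Wz = {} \<and> fs.independent (Wz \<union> c ` I)}
         = (\<Prod>j<card I. card (UNIV::'f set) ^ fs.dim U - card (UNIV::'f set) ^ (card Wz + j))"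
  using I
proof (induction I rule: finite_induct)
  case empty
  have eq: "{c \<in> {} \<rightarrow>\<^sub>E U. inj_on c {} \<and> c ` {} \<inter> Wz = {} \<and> fs.independent (Wz \<union> c ` {})}
        = {\<lambda>_. undefined}" (is "?A = _") using Wz by auto
  show ?case unfolding eq by simp
next
  case (insert i I)
  define q where "q = card (UNIV::'f set)"
  define S where "S = {c \<in> I \<rightarrow>\<^sub>E U. inj_on c I \<and> c ` I \<inter> Wz = {} \<and> fs.independent (Wz \<union> c ` I)}"
  define T where "T = {c \<in> insert i I \<rightarrow>\<^sub>E U. inj_on c (insert i I) \<and> c ` insert i I \<inter> Wz = {}
                        \<and> fs.independent (Wz \<union> c ` insert i I)}"
  define R where "R = (\<lambda>c. U - fs.span (Wz \<union> c ` I))"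
  have finWz: "finite Wz" using Wz(1) U(2) finite_subset by blast
  have TS: "T = (\<lambda>(c, x). c(i := x)) ` (SIGMA c:S. R c)"
  proof
    show "T \<subseteq> (\<lambda>(c, x). c(i := x)) ` (SIGMA c:S. R c)"
    proof
      fix c' assume c': "c' \<in> T"
      define c where "c = c'(i := undefined)"
      have cI: "c ` I = c' ` I" using insert(2) by (auto simp: c_def)
      have "c \<in> S"
      proof -
        have "c \<in> I \<rightarrow>\<^sub>E U" using c' insert(2) by (auto simp: T_def c_def PiE_def extensional_def)
        moreover have "inj_on c I" using c' insert(2) unfolding T_def c_def
          by (auto simp: inj_on_def)
        moreover have "c ` I \<inter> Wz = {}" using c' cI by (auto simp: T_def)
        moreover have "fs.independent (Wz \<union> c ` I)"
        proof -
          have "fs.independent (Wz \<union> c' ` insert i I)" using c' by (simp add: T_def)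
          moreover have "Wz \<union> c ` I \<subseteq> Wz \<union> c' ` insert i I" using cI by auto
          ultimately show ?thesis using fs.independent_mono by blast
        qed
        ultimately show ?thesis by (simp add: S_def)
      qed
      moreover have "c' i \<in> R c"
      proof -
        have ind: "fs.independent (insert (c' i) (Wz \<union> c ` I))" using c' cI by (simp add: T_def)
        have "c' i \<notin> Wz" using c' by (auto simp: T_def)
        moreover have "c' i \<notin> c ` I" using c' cI insert(2) by (auto simp: T_def)
        ultimately have "c' i \<notin> Wz \<union> c ` I" by blast
        then have "c' i \<notin> fs.span (Wz \<union> c ` I)"
          using ind fs.independent_insert[of "c' i" "Wz \<union> c ` I"] by simp
        moreover have "c' i \<in> U" using c' by (auto simp: T_def)
        ultimately show ?thesis by (simp add: R_def)
      qed
      ultimately have mem: "(c, c' i) \<in> (SIGMA c:S. R c)" by blast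
      have "c' = (\<lambda>(c, x). c(i := x)) (c, c' i)" by (simp add: c_def)
      from this mem show "c' \<in> (\<lambda>(c, x). c(i := x)) ` (SIGMA c:S. R c)" by (rule image_eqI)
    qed
  next
    show "(\<lambda>(c, x). c(i := x)) ` (SIGMA c:S. R c) \<subseteq> T"
    proof clarify
      fix c x assume c: "c \<in> S" and x: "x \<in> R c"
      have cI: "(c(i := x)) ` I = c ` I" using insert(2) by auto
      have xn: "x \<notin> fs.span (Wz \<union> c ` I)" using x by (simp add: R_def)
      then have "x \<notin> Wz \<union> c ` I" using fs.span_superset[of "Wz \<union> c ` I"] by blast
      moreover have "fs.independent (insert x (Wz \<union> c ` I))"
        using xn c by (intro fs.independent_insertI) (auto simp: S_def)
      moreover have xU: "x \<in> U" using x by (simp add: R_def)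
      moreover have "c \<in> I \<rightarrow>\<^sub>E U" "inj_on c I" "c ` I \<inter> Wz = {}" using c by (simp_all add: S_def)
      ultimately have h: "x \<notin> Wz" "x \<notin> c ` I" "fs.independent (insert x (Wz \<union> c ` I))"
        "x \<in> U" "c \<in> I \<rightarrow>\<^sub>E U" "inj_on c I" "c ` I \<inter> Wz = {}" by auto
      have im: "(c(i := x)) ` insert i I = insert x (c ` I)" by (simp only: image_insert fun_upd_same cI)
      have m1: "c(i := x) \<in> insert i I \<rightarrow>\<^sub>E U" using h by (intro PiE_fun_upd)
      have m2: "inj_on (c(i := x)) (insert i I)"
        using h insert(2) cI by (simp add: inj_on_fun_updI)
      have m3: "(c(i := x)) ` insert i I \<inter> Wz = {}" using h im by auto
      have m4: "fs.independent (Wz \<union> (c(i := x)) ` insert i I)" using h im by simp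
      show "c(i := x) \<in> T" unfolding T_def using m1 m2 m3 m4 by blast
    qed
  qed
  have inj: "inj_on (\<lambda>(c, x). c(i := x)) (SIGMA c:S. R c)"
  proof (rule inj_onI, clarify)
    fix c x d y assume c: "c \<in> S" "x \<in> R c" "d \<in> S" "y \<in> R d" and eq: "c(i := x) = d(i := y)"
    have "c i = undefined" "d i = undefined" using c insert(2) by (auto simp: S_def PiE_def extensional_def)
    then show "c = d \<and> x = y" using eq by (metis fun_upd_same fun_upd_triv fun_upd_upd)
  qed
  have finS: "finite S" unfolding S_def using U(2) insert(1)
    by (intro finite_subset[OF _ finite_PiE[of I "\<lambda>_. U"]]) auto
  have cardR: "card (R c) = q ^ fs.dim U - q ^ (card Wz + card I)" if c: "c \<in> S" for c
  proof -
    have sub: "fs.span (Wz \<union> c ` I) \<subseteq> U"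
      using c Wz(1) U(1) by (intro fs.span_minimal) (auto simp: S_def PiE_def)
    have fin: "finite (Wz \<union> c ` I)" using finWz insert(1) by simp
    have cc: "card (Wz \<union> c ` I) = card Wz + card I"
      using c finWz insert(1) by (simp add: S_def card_Un_disjoint card_image Int_commute)
    have "card (fs.span (Wz \<union> c ` I)) = q ^ (card Wz + card I)"
      using card_span_indep[OF fin] c cc by (simp add: S_def q_def)
    moreover have "card U = q ^ fs.dim U" using card_subspace[OF U(2) U(1)] by (simp add: q_def)
    ultimately show ?thesis unfolding R_def using card_Diff_subset[OF finite_subset[OF sub U(2)] sub]
      by simp
  qed
  have "card T = card (SIGMA c:S. R c)" using TS inj card_image by metis
  also have "\<dots> = (\<Sum>c\<in>S. card (R c))" using finS U(2)
    by (intro card_SigmaI) (auto simp: R_def)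
  also have "\<dots> = card S * (q ^ fs.dim U - q ^ (card Wz + card I))"
    using cardR by simp
  also have "\<dots> = (\<Prod>j<card (insert i I). q ^ fs.dim U - q ^ (card Wz + j))"
    using insert.IH insert(1,2) by (simp add: S_def q_def)
  finally show ?case by (simp add: T_def q_def)
qed



definition Bset :: "nat \<Rightarrow> (nat \<Rightarrow> nat \<Rightarrow> 'f::field) set" where
  "Bset n = {b \<in> {..<n} \<rightarrow>\<^sub>E Fn n. inj_on b {..<n} \<and> fs.independent (b ` {..<n})}"

definition phi :: "(nat \<Rightarrow> nat \<Rightarrow> 'f::field) \<Rightarrow> nat set \<Rightarrow> (nat \<Rightarrow> 'f) set" where
  "phi b S = fs.span (b ` S)"

lemma card_Bset: "card (Bset n :: (nat \<Rightarrow> nat \<Rightarrow> 'f::{field,finite}) set)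
   = (\<Prod>j<n. card (UNIV::'f set) ^ n - card (UNIV::'f set) ^ j)"
  using count_ext[OF subspace_Fn[of n] finite_Fn[of n], where Wz="{}" and I="{..<n}" and 'f='f]
  by (simp add: Bset_def dim_Fn fs.independent_empty)

lemma card_Bset_pos: "0 < card (Bset n :: (nat \<Rightarrow> nat \<Rightarrow> 'f::{field,finite}) set)"
proof -
  have "1 < card (UNIV::'f set)" using card_field_ge2[where 'f='f] by simp
  then have "\<forall>j<n. card (UNIV::'f set) ^ j < card (UNIV::'f set) ^ n"
    by (simp add: power_strict_increasing)
  then show ?thesis unfolding card_Bset by (simp add: prod_pos)
qed

lemma Bset_props:
  fixes b :: "nat \<Rightarrow> nat \<Rightarrow> 'f::{field,finite}"
  assumes b: "b \<in> Bset n" and S: "S \<subseteq> {..<n}"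
  shows "fs.independent (b ` S)" "card (b ` S) = card S" "b ` S \<subseteq> Fn n"
    "phi b S \<in> subspaces n" "sdim (phi b S) = card S"
proof -
  show i: "fs.independent (b ` S)" using b S fs.independent_mono[of "b ` {..<n}" "b ` S"]
    by (auto simp: Bset_def)
  show c: "card (b ` S) = card S" using b S by (auto simp: Bset_def intro: card_image inj_on_subset)
  show s: "b ` S \<subseteq> Fn n" using b S by (auto simp: Bset_def PiE_def)
  have "phi b S \<subseteq> Fn n" unfolding phi_def using s subspace_Fn by (rule fs.span_minimal)
  then show "phi b S \<in> subspaces n" by (simp add: subspaces_def phi_def)
  show "sdim (phi b S) = card S" using i c by (simp add: sdim_def phi_def fs.dim_eq_card_independent)
qed

lemma Bset_notin:
  fixes b :: "nat \<Rightarrow> nat \<Rightarrow> 'f::{field,finite}"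
  assumes b: "b \<in> Bset n" and S: "S \<subseteq> {..<n}" and t: "t < n" "t \<notin> S"
  shows "b t \<notin> phi b S"
proof -
  have "fs.independent (b ` insert t S)" using Bset_props(1)[OF b, of "insert t S"] S t by auto
  moreover have "b t \<notin> b ` S" using b S t by (auto simp: Bset_def inj_on_def)
  ultimately show ?thesis using fs.independent_insert[of "b t" "b ` S"] by (simp add: phi_def)
qed

lemma phi_mono:
  fixes b :: "nat \<Rightarrow> nat \<Rightarrow> 'f::{field,finite}"
  assumes b: "b \<in> Bset n" and ST: "S \<subset> T" "T \<subseteq> {..<n}"
  shows "phi b S \<subset> phi b T"
proof -
  obtain t where t: "t \<in> T" "t \<notin> S" using ST by blast
  have "phi b S \<subseteq> phi b T" unfolding phi_def using ST by (intro fs.span_mono) auto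
  moreover have "b t \<in> phi b T" unfolding phi_def using t by (intro fs.span_base) auto
  moreover have "b t \<notin> phi b S" using Bset_notin[OF b, of S t] ST t by auto
  ultimately show ?thesis by blast
qed

lemma phi_inj:
  fixes b :: "nat \<Rightarrow> nat \<Rightarrow> 'f::{field,finite}"
  assumes b: "b \<in> Bset n"
  shows "inj_on (phi b) (Pow {..<n})"
proof
  fix S T assume ST: "S \<in> Pow {..<n}" "T \<in> Pow {..<n}" and eq: "phi b S = phi b T"
  show "S = T"
  proof (rule ccontr)
    assume "S \<noteq> T"
    then obtain t where "t \<in> S \<and> t \<notin> T \<or> t \<in> T \<and> t \<notin> S" by blast
    then show False
    proof
      assume t: "t \<in> S \<and> t \<notin> T"
      have "b t \<in> phi b S" unfolding phi_def using t by (intro fs.span_base) auto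
      moreover have "b t \<notin> phi b T" using Bset_notin[OF b, of T t] ST t by auto
      ultimately show False using eq by simp
    next
      assume t: "t \<in> T \<and> t \<notin> S"
      have "b t \<in> phi b T" unfolding phi_def using t by (intro fs.span_base) auto
      moreover have "b t \<notin> phi b S" using Bset_notin[OF b, of S t] ST t by auto
      ultimately show False using eq by simp
    qed
  qed
qed

lemma weakly_contains_transfer:
  fixes b :: "nat \<Rightarrow> nat \<Rightarrow> 'f::{field,finite}" and P :: "'p::order set"
  assumes b: "b \<in> Bset n" and G: "G \<subseteq> Pow {..<n}" and wc: "weakly_contains P G"
    and F: "phi b ` G \<subseteq> F"
  shows "weakly_contains P F"
proof -
  obtain f where f: "inj_on f P" "f ` P \<subseteq> G" "\<forall>x\<in>P. \<forall>y\<in>P. x < y \<longrightarrow> f x \<subset> f y"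
    using wc by (auto simp: weakly_contains_def)
  have "inj_on (phi b \<circ> f) P"
    using f(1,2) G phi_inj[OF b] by (intro comp_inj_on) (auto intro: inj_on_subset)
  moreover have "(phi b \<circ> f) ` P \<subseteq> F" using f(2) F by auto
  moreover have "\<forall>x\<in>P. \<forall>y\<in>P. x < y \<longrightarrow> (phi b \<circ> f) x \<subset> (phi b \<circ> f) y"
  proof (intro ballI impI)
    fix x y assume xy: "x \<in> P" "y \<in> P" "x < y"
    then have "f x \<subset> f y" using f(3) by blast
    moreover have "f y \<subseteq> {..<n}" using xy f(2) G by auto
    ultimately show "(phi b \<circ> f) x \<subset> (phi b \<circ> f) y" using phi_mono[OF b] by simp
  qed
  ultimately show ?thesis unfolding weakly_contains_def by blast
qed



lemma count_fixed:
  fixes V :: "(nat \<Rightarrow> 'f::{field,finite}) set"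
  assumes S: "S \<subseteq> {..<n}" "card S = k" and V: "V \<in> subspaces n" "sdim V = k"
  shows "card {b \<in> (Bset n :: (nat \<Rightarrow> nat \<Rightarrow> 'f) set). phi b S = V}
    = (\<Prod>j<k. card (UNIV::'f set) ^ k - card (UNIV::'f set) ^ j)
      * (\<Prod>j<n - k. card (UNIV::'f set) ^ n - card (UNIV::'f set) ^ (k + j))"
proof -
  define q where "q = card (UNIV::'f set)"
  define R where "R = {..<n} - S"
  define A where "A = {a \<in> S \<rightarrow>\<^sub>E V. inj_on a S \<and> a ` S \<inter> {} = {} \<and> fs.independent ({} \<union> a ` S)}"
  define C where "C = (\<lambda>a. {c \<in> R \<rightarrow>\<^sub>E (Fn n :: (nat \<Rightarrow> 'f) set). inj_on c R \<and> c ` R \<inter> a ` S = {}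
                              \<and> fs.independent (a ` S \<union> c ` R)})"
  define X where "X = {b \<in> (Bset n :: (nat \<Rightarrow> nat \<Rightarrow> 'f) set). phi b S = V}"
  define mg where "mg = (\<lambda>(a::nat \<Rightarrow> nat \<Rightarrow> 'f, c::nat \<Rightarrow> nat \<Rightarrow> 'f) i. if i \<in> S then a i else c i)"
  have Vsub: "V \<subseteq> Fn n" and Vs: "fs.subspace V" using V by (auto simp: subspaces_def)
  have finV: "finite V" using Vsub finite_Fn finite_subset by blast
  have finS: "finite S" using S finite_subset by blast
  have finR: "finite R" by (simp add: R_def)
  have cardR: "card R = n - k" using S by (simp add: R_def card_Diff_subset finS)
  have SR: "S \<union> R = {..<n}" "S \<inter> R = {}" using S by (auto simp: R_def)
  have cardV: "card V = q ^ k" using card_subspace[OF finV Vs] V by (simp add: q_def sdim_def)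
  have spanV: "fs.span Y = V" if "Y \<subseteq> V" "fs.independent Y" "card Y = k" "finite Y" for Y
  proof -
    have sub: "fs.span Y \<subseteq> V" using that(1) Vs by (rule fs.span_minimal)
    have "card (fs.span Y) = q ^ k" using card_span_indep[OF that(4,2)] that(3) by (simp add: q_def)
    then show ?thesis using card_subset_eq[OF finV sub] cardV by simp
  qed
  have XA: "X = mg ` (SIGMA a:A. C a)"
  proof
    show "X \<subseteq> mg ` (SIGMA a:A. C a)"
    proof
      fix b assume bX: "b \<in> X"
      then have b: "b \<in> Bset n" and bV: "phi b S = V" by (auto simp: X_def)
      define a where "a = restrict b S"
      define c where "c = restrict b R"
      have aS: "a ` S = b ` S" "c ` R = b ` R" by (auto simp: a_def c_def)
      have binj: "inj_on b {..<n}" and bind: "fs.independent (b ` {..<n})"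
        and bP: "b \<in> {..<n} \<rightarrow>\<^sub>E Fn n" using b by (auto simp: Bset_def)
      have "a \<in> A"
      proof -
        have "b ` S \<subseteq> V" using bV fs.span_superset[of "b ` S"] by (auto simp: phi_def)
        then have "a \<in> S \<rightarrow>\<^sub>E V" by (auto simp: a_def)
        moreover have "inj_on a S" using binj S by (auto simp: a_def inj_on_def)
        moreover have "fs.independent (a ` S)" using Bset_props(1)[OF b S(1)] aS by simp
        ultimately show ?thesis by (simp add: A_def)
      qed
      moreover have "c \<in> C a"
      proof -
        have "c \<in> R \<rightarrow>\<^sub>E Fn n" using bP by (auto simp: c_def R_def PiE_def)
        moreover have "inj_on c R" using binj by (auto simp: c_def inj_on_def R_def)
        moreover have "c ` R \<inter> a ` S = {}" using binj SR aS
          by (auto simp: inj_on_def)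
        moreover have "fs.independent (a ` S \<union> c ` R)"
          using bind aS SR by (simp add: image_Un[symmetric])
        ultimately show ?thesis by (simp add: C_def)
      qed
      moreover have "b = mg (a, c)"
      proof
        fix i show "b i = mg (a, c) i"
          using bP SR by (cases "i \<in> S"; cases "i \<in> R") (auto simp: mg_def a_def c_def PiE_def extensional_def)
      qed
      ultimately show "b \<in> mg ` (SIGMA a:A. C a)" by blast
    qed
  next
    show "mg ` (SIGMA a:A. C a) \<subseteq> X"
    proof clarify
      fix a c assume a: "a \<in> A" and c: "c \<in> C a"
      let ?b = "mg (a, c)"
      have aP: "a \<in> S \<rightarrow>\<^sub>E V" "inj_on a S" "fs.independent (a ` S)" using a by (auto simp: A_def)
      have cP: "c \<in> R \<rightarrow>\<^sub>E Fn n" "inj_on c R" "c ` R \<inter> a ` S = {}" "fs.independent (a ` S \<union> c ` R)"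
        using c by (auto simp: C_def)
      have imS: "?b ` S = a ` S" by (auto simp: mg_def)
      have imR: "?b ` R = c ` R" using SR by (force simp: mg_def)
      have im: "?b ` {..<n} = a ` S \<union> c ` R" using imS imR SR(1) by (metis image_Un)
      have "?b \<in> {..<n} \<rightarrow>\<^sub>E Fn n"
      proof -
        have "?b i \<in> Fn n" if "i < n" for i
          using that aP(1) cP(1) Vsub SR by (auto simp: mg_def PiE_def)
        moreover have "?b i = undefined" if "\<not> i < n" for i
          using that aP(1) cP(1) SR by (auto simp: mg_def PiE_def extensional_def)
        ultimately show ?thesis by (auto simp: PiE_def extensional_def)
      qed
      moreover have "inj_on ?b {..<n}"
      proof -
        have "inj_on ?b S" using aP(2) by (auto simp: inj_on_def mg_def)
        moreover have "inj_on ?b R" using cP(2) SR by (auto simp: inj_on_def mg_def)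
        moreover have "?b ` S \<inter> ?b ` R = {}" using imS imR cP(3) by auto
        ultimately have "inj_on ?b (S \<union> R)" unfolding inj_on_Un using SR(2) by blast
        then show ?thesis using SR(1) by simp
      qed
      moreover have "fs.independent (?b ` {..<n})" using im cP(4) by simp
      ultimately have "?b \<in> Bset n" by (simp add: Bset_def)
      moreover have "phi ?b S = V"
      proof -
        have "card (a ` S) = k" using aP(2) S(2) by (simp add: card_image)
        moreover have "a ` S \<subseteq> V" using aP(1) by auto
        ultimately show ?thesis unfolding phi_def imS using spanV aP(3) finS by blast
      qed
      ultimately show "?b \<in> X" by (simp add: X_def)
    qed
  qed
  have inj: "inj_on mg (SIGMA a:A. C a)"
  proof (rule inj_onI, clarify)
    fix a c a' c' assume h: "a \<in> A" "c \<in> C a" "a' \<in> A" "c' \<in> C a'" and eq: "mg (a, c) = mg (a', c')"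
    have e1: "a \<in> S \<rightarrow>\<^sub>E V" "a' \<in> S \<rightarrow>\<^sub>E V" using h by (auto simp: A_def)
    have e2: "c \<in> R \<rightarrow>\<^sub>E Fn n" "c' \<in> R \<rightarrow>\<^sub>E Fn n" using h by (auto simp: C_def)
    have "a = a'"
    proof (rule extensionalityI[of _ S])
      show "a \<in> extensional S" "a' \<in> extensional S" using e1 by (auto simp: PiE_def)
      fix i assume "i \<in> S" then show "a i = a' i" using fun_cong[OF eq, of i] by (simp add: mg_def)
    qed
    moreover have "c = c'"
    proof (rule extensionalityI[of _ R])
      show "c \<in> extensional R" "c' \<in> extensional R" using e2 by (auto simp: PiE_def)
      fix i assume "i \<in> R" then have "i \<notin> S" using SR by auto
      then show "c i = c' i" using fun_cong[OF eq, of i] by (simp add: mg_def)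
    qed
    ultimately show "a = a' \<and> c = c'" by simp
  qed
  have cardA: "card A = (\<Prod>j<k. q ^ k - q ^ j)"
    using count_ext[OF Vs finV, where Wz="{}" and I=S] V S finS
    by (simp add: A_def q_def sdim_def fs.independent_empty)
  have cardC: "card (C a) = (\<Prod>j<n - k. q ^ n - q ^ (k + j))" if a: "a \<in> A" for a
  proof -
    have aP: "a \<in> S \<rightarrow>\<^sub>E V" "inj_on a S" "fs.independent (a ` S)" using a by (auto simp: A_def)
    have "a ` S \<subseteq> Fn n" using aP(1) Vsub by auto
    moreover have "card (a ` S) = k" using aP(2) S(2) by (simp add: card_image)
    ultimately show ?thesis
      using count_ext[OF subspace_Fn[of n] finite_Fn[of n], where Wz="a ` S" and I=R] aP(3) finR cardR
      by (simp add: C_def q_def dim_Fn)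
  qed
  have finA: "finite A" unfolding A_def using finS finV
    by (intro finite_subset[OF _ finite_PiE[of S "\<lambda>_. V"]]) auto
  have finC: "finite (C a)" for a unfolding C_def using finR finite_Fn[of n, where 'f='f]
    by (intro finite_subset[OF _ finite_PiE[of R "\<lambda>_. Fn n"]]) auto
  have "card X = card (SIGMA a:A. C a)" using XA inj by (simp add: card_image)
  also have "\<dots> = (\<Sum>a\<in>A. card (C a))" using finA finC by (intro card_SigmaI) auto
  also have "\<dots> = card A * (\<Prod>j<n - k. q ^ n - q ^ (k + j))" using cardC by simp
  finally show ?thesis using cardA by (simp add: X_def q_def)
qed



definition Lev :: "nat \<Rightarrow> nat \<Rightarrow> (nat \<Rightarrow> 'f::field) set set" where
  "Lev n k = {V \<in> subspaces n. sdim V = k}"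

lemma prod_split_add: "(\<Prod>j<a + b. f j) = (\<Prod>j<a. f j) * (\<Prod>j<b. f (a + j))"
  for f :: "nat \<Rightarrow> 'a::comm_monoid_mult"
  by (induction b) (simp_all add: mult.assoc)

lemma card_Lev_mul:
  assumes "k \<le> n"
  shows "card (Lev n k :: (nat \<Rightarrow> 'f::{field,finite}) set set)
      * ((\<Prod>j<k. card (UNIV::'f set) ^ k - card (UNIV::'f set) ^ j)
      * (\<Prod>j<n - k. card (UNIV::'f set) ^ n - card (UNIV::'f set) ^ (k + j)))
     = card (Bset n :: (nat \<Rightarrow> nat \<Rightarrow> 'f) set)"
proof -
  define S where "S = {..<k}"
  have S: "S \<subseteq> {..<n}" "card S = k" using assms by (auto simp: S_def)
  have eq: "(Bset n :: (nat \<Rightarrow> nat \<Rightarrow> 'f) set)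
         = (\<Union>V\<in>Lev n k. {b \<in> Bset n. phi b S = V})"
    using Bset_props(4,5)[OF _ S(1)] S(2) by (auto simp: Lev_def)
  have finL: "finite (Lev n k :: (nat \<Rightarrow> 'f) set set)"
    using finite_subspaces[of n, where 'f='f] by (simp add: Lev_def)
  have finB: "finite (Bset n :: (nat \<Rightarrow> nat \<Rightarrow> 'f) set)" using card_Bset_pos[of n, where 'f='f]
    card.infinite by fastforce
  have "card (Bset n :: (nat \<Rightarrow> nat \<Rightarrow> 'f) set)
      = (\<Sum>V\<in>Lev n k. card {b \<in> (Bset n :: (nat \<Rightarrow> nat \<Rightarrow> 'f) set). phi b S = V})"
  proof -
    have "card (Bset n :: (nat \<Rightarrow> nat \<Rightarrow> 'f) set)
       = card (\<Union>V\<in>Lev n k. {b \<in> (Bset n :: (nat \<Rightarrow> nat \<Rightarrow> 'f) set). phi b S = V})"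
      using eq by (rule arg_cong)
    also have "\<dots> = (\<Sum>V\<in>Lev n k. card {b \<in> (Bset n :: (nat \<Rightarrow> nat \<Rightarrow> 'f) set). phi b S = V})"
      by (rule card_UN_disjoint[OF finL]) (use finB in auto)
    finally show ?thesis .
  qed
  also have "\<dots> = (\<Sum>V\<in>(Lev n k :: (nat \<Rightarrow> 'f) set set). ((\<Prod>j<k. card (UNIV::'f set) ^ k - card (UNIV::'f set) ^ j)
      * (\<Prod>j<n - k. card (UNIV::'f set) ^ n - card (UNIV::'f set) ^ (k + j))))"
    by (rule sum.cong[OF refl]) (use count_fixed[OF S] in \<open>auto simp: Lev_def\<close>)
  finally show ?thesis by simp
qed

lemma gauss_binom_Suc:
  "Suc k \<le> n \<Longrightarrow> gauss_binom q n (Suc k) = gauss_binom q n k * ((q ^ (n - k) - 1) / (q ^ (k + 1) - 1))"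
  by (simp add: gauss_binom_def)

lemma gauss_binom_prod:
  fixes q :: real
  assumes "k \<le> n" and q1: "1 < q"
  shows "gauss_binom q n k * (\<Prod>j<k. q ^ k - q ^ j) = (\<Prod>j<k. q ^ n - q ^ j)"
  using assms(1)
proof (induction k)
  case 0
  then show ?case by (simp add: gauss_binom_def)
next
  case (Suc k)
  have A: "(\<Prod>j<Suc k. q ^ Suc k - q ^ j) = (q ^ Suc k - 1) * (q ^ k * (\<Prod>j<k. q ^ k - q ^ j))"
  proof -
    have "(\<Prod>j<Suc k. q ^ Suc k - q ^ j) = (q ^ Suc k - 1) * (\<Prod>j<k. q ^ Suc k - q ^ Suc j)"
      by (simp only: prod.lessThan_Suc_shift power_0)
    also have "(\<Prod>j<k. q ^ Suc k - q ^ Suc j) = (\<Prod>j<k. q * (q ^ k - q ^ j))"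
      by (simp add: algebra_simps)
    also have "\<dots> = q ^ k * (\<Prod>j<k. q ^ k - q ^ j)" by (simp add: prod.distrib)
    finally show ?thesis .
  qed
  have B: "q ^ n - q ^ k = q ^ k * (q ^ (n - k) - 1)"
    using Suc(2) by (simp add: algebra_simps power_add[symmetric])
  show ?case
  proof (cases "q ^ (k + 1) - 1 = 0")
    case True
    moreover have "1 < q ^ (k + 1)" using q1 by (intro one_less_power) auto
    ultimately show ?thesis by simp
  next
    case False
    have "gauss_binom q n (Suc k) * (\<Prod>j<Suc k. q ^ Suc k - q ^ j)
        = gauss_binom q n k * (\<Prod>j<k. q ^ k - q ^ j) * (q ^ k * (q ^ (n - k) - 1))"
      using False unfolding gauss_binom_Suc[OF Suc(2)] A by (simp add: field_simps)
    also have "\<dots> = (\<Prod>j<Suc k. q ^ n - q ^ j)" using Suc B by simp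
    finally show ?thesis .
  qed
qed

lemma of_nat_prod_diff_pow:
  assumes "\<And>j. j < k \<Longrightarrow> b j \<le> a" and q0: "0 < q"
  shows "real (\<Prod>j<k. (q::nat) ^ a - q ^ b j) = (\<Prod>j<k. real q ^ a - real q ^ b j)"
proof -
  have "real (\<Prod>j<k. q ^ a - q ^ b j) = (\<Prod>j<k. real (q ^ a - q ^ b j))" by (simp add: of_nat_prod)
  also have "\<dots> = (\<Prod>j<k. real q ^ a - real q ^ b j)"
  proof (rule prod.cong[OF refl])
    fix j assume "j \<in> {..<k}"
    then have "b j \<le> a" using assms by simp
    then show "real (q ^ a - q ^ b j) = real q ^ a - real q ^ b j"
    proof -
      have "q ^ b j \<le> q ^ a" using \<open>b j \<le> a\<close> q0 by (simp add: power_increasing)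
      then show ?thesis by (simp add: of_nat_diff)
    qed
  qed
  finally show ?thesis .
qed

lemma card_Lev:
  assumes "k \<le> n"
  shows "real (card (Lev n k :: (nat \<Rightarrow> 'f::{field,finite}) set set))
       = gauss_binom (real (card (UNIV::'f set))) n k"
proof -
  define q where "q = card (UNIV::'f set)"
  have q1: "1 < q" using card_field_ge2[where 'f='f] by (simp add: q_def)
  define A where "A = (\<Prod>j<k. q ^ k - q ^ j)"
  define E where "E = (\<Prod>j<n - k. q ^ n - q ^ (k + j))"
  define B where "B = (\<Prod>j<k. q ^ n - q ^ j)"
  have "card (Lev n k :: (nat \<Rightarrow> 'f) set set) * (A * E) = (\<Prod>j<n. q ^ n - q ^ j)"
    using card_Lev_mul[OF assms, where 'f='f] card_Bset[of n, where 'f='f] by (simp add: A_def E_def q_def)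
  also have "(\<Prod>j<n. q ^ n - q ^ j) = B * E"
    using prod_split_add[where a=k and b="n - k" and f="\<lambda>j. q ^ n - q ^ j"] assms by (simp add: B_def E_def)
  finally have eq: "card (Lev n k :: (nat \<Rightarrow> 'f) set set) * A * E = B * E" by (simp add: mult.assoc)
  have "E > 0" unfolding E_def using q1 by (auto intro!: prod_pos simp: power_strict_increasing)
  then have eq2: "card (Lev n k :: (nat \<Rightarrow> 'f) set set) * A = B" using eq by simp
  have rA: "real A = (\<Prod>j<k. real q ^ k - real q ^ j)" unfolding A_def
    by (rule of_nat_prod_diff_pow) (use q1 in simp_all)
  have rB: "real B = (\<Prod>j<k. real q ^ n - real q ^ j)" unfolding B_def
    by (rule of_nat_prod_diff_pow) (use assms q1 in simp_all)
  have Apos: "real A > 0" unfolding rA using q1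
    by (intro prod_pos) (auto simp: power_strict_increasing)
  have "real (card (Lev n k :: (nat \<Rightarrow> 'f) set set)) * real A = gauss_binom (real q) n k * real A"
    using eq2 gauss_binom_prod[OF assms, of "real q"] q1 rA rB
    by (metis of_nat_1 of_nat_less_iff of_nat_mult)
  then show ?thesis using Apos by (simp add: q_def)
qed



lemma sdim_le:
  assumes "V \<in> (subspaces n :: (nat \<Rightarrow> 'f::{field,finite}) set set)"
  shows "sdim V \<le> n"
proof -
  have V: "V \<subseteq> Fn n" "fs.subspace V" using assms by (auto simp: subspaces_def)
  have fin: "finite V" using V finite_Fn finite_subset by blast
  have "card V \<le> card (Fn n :: (nat \<Rightarrow> 'f) set)" using V(1) finite_Fn by (rule card_mono[rotated])
  then have "card (UNIV::'f set) ^ sdim V \<le> card (UNIV::'f set) ^ n"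
    using card_subspace[OF fin V(2)] card_Fn[of n, where 'f='f] by (simp add: sdim_def)
  moreover have "1 < card (UNIV::'f set)" using card_field_ge2[where 'f='f] by simp
  ultimately show ?thesis using power_le_imp_le_exp by blast
qed

lemma card_filter_sum: "finite A \<Longrightarrow> card {x \<in> A. P x} = (\<Sum>x\<in>A. if P x then 1 else 0)"
  by (simp add: sum.If_cases Int_def)

lemma La_ge:
  assumes "G \<subseteq> Pow {..<n}" "P_free P G"
  shows "card G \<le> La P n"
proof -
  have "finite {card F | F. F \<subseteq> Pow {..<n} \<and> P_free P F}"
  proof -
    have "{card F | F. F \<subseteq> Pow {..<n} \<and> P_free P F} \<subseteq> card ` Pow (Pow {..<n::nat})" by auto
    then show ?thesis using finite_subset by blast
  qed
  then show ?thesis unfolding La_def using assms by (intro Max_ge) auto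
qed

definition Nk :: "nat \<Rightarrow> nat \<Rightarrow> nat \<Rightarrow> nat" where
  "Nk q n k = (\<Prod>j<k. q ^ k - q ^ j) * (\<Prod>j<n - k. q ^ n - q ^ (k + j))"

lemma weighted_nat:
  fixes F :: "(nat \<Rightarrow> 'f::{field,finite}) set set" and P :: "'p::order set"
  assumes F: "F \<subseteq> subspaces n" "P_free P F"
  shows "(\<Sum>V\<in>F. (n choose sdim V) * Nk (card (UNIV::'f set)) n (sdim V))
       \<le> card (Bset n :: (nat \<Rightarrow> nat \<Rightarrow> 'f) set) * La P n"
proof -
  define B where "B = (Bset n :: (nat \<Rightarrow> nat \<Rightarrow> 'f) set)"
  define G where "G = (\<lambda>b. {S \<in> Pow {..<n}. phi b S \<in> F})"
  have finB: "finite B" using card_Bset_pos[of n, where 'f='f] card.infinite unfolding B_def by fastforce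
  have finF: "finite F" using F(1) finite_subspaces finite_subset by blast
  have finPow: "finite (Pow {..<n::nat})" by simp
  have Gle: "card (G b) \<le> La P n" if b: "b \<in> B" for b
  proof (rule La_ge)
    show "G b \<subseteq> Pow {..<n}" by (auto simp: G_def)
    show "P_free P (G b)"
    proof (rule ccontr)
      assume "\<not> P_free P (G b)"
      then have "weakly_contains P (G b)" by (simp add: P_free_def)
      then have "weakly_contains P F"
        using b by (intro weakly_contains_transfer[of b n "G b"]) (auto simp: G_def B_def)
      then show False using F(2) by (simp add: P_free_def)
    qed
  qed
  have cardG: "card (G b) = (\<Sum>V\<in>F. \<Sum>S\<in>Pow {..<n}. if phi b S = V then 1 else 0)" for b
  proof -
    have "card (G b) = (\<Sum>S\<in>Pow {..<n}. if phi b S \<in> F then 1 else 0)"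
      unfolding G_def by (rule card_filter_sum[OF finPow])
    also have "\<dots> = (\<Sum>S\<in>Pow {..<n}. \<Sum>V\<in>F. if phi b S = V then 1 else 0)"
    proof (rule sum.cong[OF refl])
      fix S
      show "(if phi b S \<in> F then 1 else 0) = (\<Sum>V\<in>F. if phi b S = V then 1 else (0::nat))"
        using finF by (simp add: sum.delta)
    qed
    also have "\<dots> = (\<Sum>V\<in>F. \<Sum>S\<in>Pow {..<n}. if phi b S = V then 1 else 0)" by (rule sum.swap)
    finally show ?thesis .
  qed
  have inner: "(\<Sum>S\<in>Pow {..<n}. \<Sum>b\<in>B. if phi b S = V then 1 else 0)
      = (n choose sdim V) * Nk (card (UNIV::'f set)) n (sdim V)" if V: "V \<in> F" for V
  proof -
    have "(\<Sum>S\<in>Pow {..<n}. \<Sum>b\<in>B. if phi b S = V then 1 else (0::nat))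
        = (\<Sum>S\<in>Pow {..<n}. if card S = sdim V then Nk (card (UNIV::'f set)) n (sdim V) else 0)"
    proof (rule sum.cong[OF refl])
      fix S assume S: "S \<in> Pow {..<n}"
      have "(\<Sum>b\<in>B. if phi b S = V then 1 else (0::nat)) = card {b \<in> B. phi b S = V}"
        by (rule card_filter_sum[OF finB, symmetric])
      also have "\<dots> = (if card S = sdim V then Nk (card (UNIV::'f set)) n (sdim V) else 0)"
      proof (cases "card S = sdim V")
        case True
        have Ss: "S \<subseteq> {..<n}" using S by simp
        have Vs: "V \<in> subspaces n" using V F(1) by blast
        show ?thesis using count_fixed[OF Ss True Vs refl] True unfolding B_def Nk_def by simp
      next
        case False
        have "{b \<in> B. phi b S = V} = {}"
        proof -
          have "phi b S \<noteq> V" if "b \<in> B" for b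
            using Bset_props(5)[of b n S] S False that by (auto simp: B_def)
          then show ?thesis by blast
        qed
        then show ?thesis using False by (simp only: card.empty if_False)
      qed
      finally show "(\<Sum>b\<in>B. if phi b S = V then 1 else (0::nat))
        = (if card S = sdim V then Nk (card (UNIV::'f set)) n (sdim V) else 0)" .
    qed
    also have "\<dots> = card {S \<in> Pow {..<n}. card S = sdim V} * Nk (card (UNIV::'f set)) n (sdim V)"
      by (simp add: sum.If_cases Int_def)
    also have "card {S \<in> Pow {..<n}. card S = sdim V} = n choose sdim V"
      using n_subsets[of "{..<n}" "sdim V"] by (simp add: Pow_def)
    finally show ?thesis .
  qed
  have "(\<Sum>b\<in>B. card (G b)) = (\<Sum>b\<in>B. \<Sum>V\<in>F. \<Sum>S\<in>Pow {..<n}. if phi b S = V then 1 else 0)"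
    using cardG by simp
  also have "\<dots> = (\<Sum>V\<in>F. \<Sum>b\<in>B. \<Sum>S\<in>Pow {..<n}. if phi b S = V then 1 else 0)"
    by (rule sum.swap)
  also have "\<dots> = (\<Sum>V\<in>F. \<Sum>S\<in>Pow {..<n}. \<Sum>b\<in>B. if phi b S = V then 1 else 0)"
    by (intro sum.cong refl sum.swap)
  also have "\<dots> = (\<Sum>V\<in>F. (n choose sdim V) * Nk (card (UNIV::'f set)) n (sdim V))"
    using inner by simp
  finally have eq: "(\<Sum>b\<in>B. card (G b)) = (\<Sum>V\<in>F. (n choose sdim V) * Nk (card (UNIV::'f set)) n (sdim V))" .
  have "(\<Sum>b\<in>B. card (G b)) \<le> card B * La P n"
    using Gle sum_bounded_above[of B "\<lambda>b. card (G b)" "La P n"] by simp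
  then show ?thesis using eq by (simp add: B_def)
qed



lemma lt1_pow[simp]: "1 < (q::real) \<Longrightarrow> 1 < q * q ^ a"
  by (metis one_less_power power_Suc zero_less_Suc)

lemma binom_step: "real (n choose Suc k) * real (Suc k) = real (n choose k) * (real n - real k)"
proof (cases "k \<le> n")
  case True
  have "Suc k * (n choose Suc k) = (n - k) * (n choose k)"
    using binomial_absorption[of k n] binomial_absorb_comp[of n k] by simp
  then have "real (n choose Suc k) * real (Suc k) = real (n choose k) * real (n - k)"
    by (metis of_nat_mult mult.commute)
  also have "real (n - k) = real n - real k" using True by (simp add: of_nat_diff)
  finally show ?thesis .
next
  case False
  then show ?thesis by (simp add: binomial_eq_0)
qed

lemma gb_pos: "1 < q \<Longrightarrow> k \<le> n \<Longrightarrow> 0 < gauss_binom q n k"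
  unfolding gauss_binom_def
  by (auto intro!: prod_pos divide_pos_pos simp: one_less_power)

lemma gb_step: "1 < q \<Longrightarrow> Suc k \<le> n \<Longrightarrow>
   gauss_binom q n (Suc k) * (q ^ (k + 1) - 1) = gauss_binom q n k * (q ^ (n - k) - 1)"
proof -
  assume q: "1 < q" and k: "Suc k \<le> n"
  have "q ^ (k + 1) - 1 > 0" using q by simp
  then show ?thesis using gauss_binom_Suc[OF k, of q] by simp
qed

definition qf :: "real \<Rightarrow> nat \<Rightarrow> real" where "qf q m = (\<Prod>i<m. q ^ (i + 1) - 1)"

lemma qf_pos: "1 < q \<Longrightarrow> 0 < qf q m"
  unfolding qf_def by (auto intro!: prod_pos simp: one_less_power)

lemma gb_qf: "1 < q \<Longrightarrow> k \<le> n \<Longrightarrow> gauss_binom q n k * qf q k * qf q (n - k) = qf q n"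
proof (induction k)
  case 0
  then show ?case by (simp add: gauss_binom_def qf_def)
next
  case (Suc k)
  have ih: "gauss_binom q n k * qf q k * qf q (n - k) = qf q n" using Suc by simp
  have nk: "n - k = Suc (n - Suc k)" using Suc(3) by simp
  have "gauss_binom q n (Suc k) * qf q (Suc k) * qf q (n - Suc k)
      = (gauss_binom q n (Suc k) * (q ^ (k + 1) - 1)) * qf q k * qf q (n - Suc k)"
    by (simp add: qf_def)
  also have "\<dots> = gauss_binom q n k * qf q k * ((q ^ (n - k) - 1) * qf q (n - Suc k))"
    using gb_step[OF Suc(2,3)] by simp
  also have "(q ^ (n - k) - 1) * qf q (n - Suc k) = qf q (n - k)"
  proof -
    have m: "n - Suc k = n - k - 1" by simp
    show ?thesis unfolding m unfolding nk qf_def prod.lessThan_Suc by simp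
  qed
  finally show ?case using ih by simp
qed

lemma gb_sym: "1 < q \<Longrightarrow> k \<le> n \<Longrightarrow> gauss_binom q n (n - k) = gauss_binom q n k"
proof -
  assume q: "1 < q" and k: "k \<le> n"
  have a: "gauss_binom q n k * qf q k * qf q (n - k) = qf q n" using gb_qf[OF q k] .
  have b: "gauss_binom q n (n - k) * qf q (n - k) * qf q k = qf q n"
    using gb_qf[OF q, of "n - k" n] k by simp
  have "qf q k * qf q (n - k) > 0" using qf_pos[OF q] by simp
  then have "gauss_binom q n (n - k) * (qf q k * qf q (n - k)) = gauss_binom q n k * (qf q k * qf q (n - k))"
    using a b by (simp add: algebra_simps)
  then show ?thesis using qf_pos[OF q, of k] qf_pos[OF q, of "n - k"] by simp
qed

lemma pow_lin: "1 \<le> (q::real) \<Longrightarrow> q ^ a - 1 \<le> real a * q ^ a * (q - 1)"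
proof (induction a)
  case 0 then show ?case by simp
next
  case (Suc a)
  have h1: "q ^ Suc a - 1 = q * (q ^ a - 1) + (q - 1)" by (simp add: algebra_simps)
  have h2: "q * (q ^ a - 1) \<le> q * (real a * q ^ a * (q - 1))"
    using Suc by (intro mult_left_mono) auto
  have h3: "q - 1 \<le> q ^ Suc a * (q - 1)"
    using mult_right_mono[of 1 "q ^ Suc a" "q - 1"] Suc(2) one_le_power[of q "Suc a"] by simp
  have "q ^ Suc a - 1 \<le> real a * q ^ Suc a * (q - 1) + q ^ Suc a * (q - 1)"
    using h1 h2 h3 by (simp add: algebra_simps)
  also have "\<dots> = real (Suc a) * q ^ Suc a * (q - 1)" by (simp add: algebra_simps)
  finally show ?case .
qed

lemma pow_ratio: "1 \<le> (q::real) \<Longrightarrow> a \<le> b \<Longrightarrow> real b * (q ^ a - 1) \<le> real a * (q ^ b - 1)"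
proof (induction b)
  case 0 then show ?case by simp
next
  case (Suc b)
  show ?case
  proof (cases "a = Suc b")
    case True then show ?thesis by simp
  next
    case False
    then have ab: "a \<le> b" using Suc by simp
    have ih: "real b * (q ^ a - 1) \<le> real a * (q ^ b - 1)" using Suc ab by simp
    have "q ^ a - 1 \<le> real a * q ^ a * (q - 1)" using pow_lin Suc by simp
    also have "\<dots> \<le> real a * q ^ b * (q - 1)"
      using Suc(2) ab by (intro mult_right_mono mult_left_mono power_increasing) auto
    finally have "real (Suc b) * (q ^ a - 1) \<le> real a * (q ^ b - 1) + real a * q ^ b * (q - 1)"
      using ih by (simp add: algebra_simps)
    also have "\<dots> = real a * (q ^ Suc b - 1)" by (simp add: algebra_simps)
    finally show ?thesis .
  qed
qed



definition wt :: "real \<Rightarrow> nat \<Rightarrow> nat \<Rightarrow> real" where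
  "wt q n k = real (n choose k) / gauss_binom q n k"

lemma wt_pos: "1 < q \<Longrightarrow> k \<le> n \<Longrightarrow> 0 < wt q n k"
  unfolding wt_def using gb_pos[of q k n] by simp

lemma wt_sym: "1 < q \<Longrightarrow> k \<le> n \<Longrightarrow> wt q n (n - k) = wt q n k"
  unfolding wt_def using gb_sym[of q k n] binomial_symmetric[of k n] by simp

lemma wt_step:
  assumes q: "1 < q" and k: "2 * k + 1 \<le> n"
  shows "wt q n (Suc k) \<le> wt q n k"
proof -
  let ?b = "\<lambda>k. real (n choose k)" and ?g = "gauss_binom q n"
  have kn: "Suc k \<le> n" using k by simp
  have e1: "?b (Suc k) * real (Suc k) = ?b k * real (n - k)"
    using binom_step[of n k] kn by (simp add: of_nat_diff)
  have e2: "?g (Suc k) * (q ^ (k + 1) - 1) = ?g k * (q ^ (n - k) - 1)" using gb_step[OF q kn] .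
  have ineq: "real (n - k) * (q ^ (k + 1) - 1) \<le> real (k + 1) * (q ^ (n - k) - 1)"
    using pow_ratio[of q "k + 1" "n - k"] q k by simp
  have gpos: "?g k > 0" "?g (Suc k) > 0" using gb_pos[OF q] kn by auto
  have X: "real (Suc k) * (q ^ (k + 1) - 1) > 0" using q by simp
  have "?b (Suc k) * ?g k * (real (Suc k) * (q ^ (k + 1) - 1))
      = (?b (Suc k) * real (Suc k)) * (?g k * (q ^ (k + 1) - 1))" by (simp only: ac_simps)
  also have "\<dots> = (?b k * real (n - k)) * (?g k * (q ^ (k + 1) - 1))" by (simp only: e1)
  also have "\<dots> = ?b k * ?g k * (real (n - k) * (q ^ (k + 1) - 1))" by (simp only: ac_simps)
  also have "\<dots> \<le> ?b k * ?g k * (real (k + 1) * (q ^ (n - k) - 1))"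
    using ineq gpos by (intro mult_left_mono) auto
  also have "\<dots> = ?b k * real (Suc k) * (?g k * (q ^ (n - k) - 1))" by (simp only: ac_simps Suc_eq_plus1)
  also have "\<dots> = ?b k * real (Suc k) * (?g (Suc k) * (q ^ (k + 1) - 1))" by (simp only: e2)
  also have "\<dots> = ?b k * ?g (Suc k) * (real (Suc k) * (q ^ (k + 1) - 1))" by (simp only: ac_simps)
  finally have "?b (Suc k) * ?g k \<le> ?b k * ?g (Suc k)"
    using X by (simp add: mult_le_cancel_right)
  then show ?thesis unfolding wt_def using gpos by (simp add: divide_simps mult.commute)
qed

lemma wt_mono:
  assumes q: "1 < q" and ij: "i \<le> j" "j \<le> n div 2"
  shows "wt q n j \<le> wt q n i"
  using ij
proof (induction j)
  case 0 then show ?case by simp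
next
  case (Suc j)
  show ?case
  proof (cases "i = Suc j")
    case True then show ?thesis by simp
  next
    case False
    then have "i \<le> j" "j \<le> n div 2" using Suc by auto
    then have "wt q n j \<le> wt q n i" using Suc by simp
    moreover have "wt q n (Suc j) \<le> wt q n j" using wt_step[OF q, of j n] Suc(3) by simp
    ultimately show ?thesis by simp
  qed
qed

lemma wt_in:
  assumes q: "1 < q" and e: "e \<le> n" and k: "(n - e) div 2 < k" "k \<le> (n - e) div 2 + e"
  shows "wt q n k \<le> wt q n ((n - e) div 2)"
proof (cases "k \<le> n div 2")
  case True
  then show ?thesis using wt_mono[OF q, of "(n - e) div 2" k n] k by simp
next
  case False
  have kn: "k \<le> n" using k e by simp
  have "wt q n k = wt q n (n - k)" using wt_sym[OF q kn] by simp
  also have "\<dots> \<le> wt q n ((n - e) div 2)"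
    using wt_mono[OF q, of "(n - e) div 2" "n - k" n] False k e by simp
  finally show ?thesis .
qed

lemma wt_out:
  assumes q: "1 < q" and e: "e \<le> n" and kn: "k \<le> n" and k: "\<not> ((n - e) div 2 < k \<and> k \<le> (n - e) div 2 + e)"
  shows "wt q n ((n - e) div 2) \<le> wt q n k"
proof (cases "k \<le> (n - e) div 2")
  case True
  then show ?thesis using wt_mono[OF q, of k "(n - e) div 2" n] by simp
next
  case False
  then have k2: "(n - e) div 2 + e < k" using k by simp
  have "wt q n ((n - e) div 2) \<le> wt q n (n - k)"
    using wt_mono[OF q, of "n - k" "(n - e) div 2" n] k2 e by simp
  also have "\<dots> = wt q n k" using wt_sym[OF q kn] .
  finally show ?thesis .
qed



lemma lp_bound:
  fixes X F :: "'a set" and d :: "'a \<Rightarrow> nat" and q L :: real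
  assumes q: "1 < q" and e: "e \<le> n" and X: "finite X" and FX: "F \<subseteq> X"
    and dX: "\<And>x. x \<in> X \<Longrightarrow> d x \<le> n"
    and cardk: "\<And>k. k \<le> n \<Longrightarrow> real (card {x \<in> X. d x = k}) = gauss_binom q n k"
    and L: "(\<Sum>x\<in>F. wt q n (d x)) \<le> L"
  shows "real (card F) \<le> (\<Sum>i=1..e. gauss_binom q n ((n - e) div 2 + i))
          + (L - (\<Sum>i=1..e. real (n choose ((n - e) div 2 + i)))) / wt q n ((n - e) div 2)"
proof -
  define j0 where "j0 = (n - e) div 2"
  define W where "W = wt q n j0"
  define inM where "inM = (\<lambda>k. j0 < k \<and> k \<le> j0 + e)"
  define h where "h = (\<lambda>k. if inM k then 1 - wt q n k / W else 0)"
  have j0n: "j0 \<le> n" using e by (simp add: j0_def)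
  have Wpos: "W > 0" unfolding W_def using wt_pos[OF q j0n] .
  have finF: "finite F" using X FX finite_subset by blast
  have hnn: "h k \<ge> 0" for k
  proof (cases "inM k")
    case True
    then have "wt q n k \<le> W" using wt_in[OF q e, of k] by (simp add: inM_def W_def j0_def)
    then show ?thesis using True Wpos by (simp add: h_def)
  qed (simp add: h_def)
  have pt: "1 \<le> wt q n (d x) / W + h (d x)" if x: "x \<in> X" for x
  proof (cases "inM (d x)")
    case True then show ?thesis by (simp add: h_def)
  next
    case False
    then have "W \<le> wt q n (d x)" using wt_out[OF q e dX[OF x]] by (simp add: inM_def W_def j0_def)
    then show ?thesis using False Wpos by (simp add: h_def)
  qed
  have "real (card F) = (\<Sum>x\<in>F. 1)" by simp
  also have "\<dots> \<le> (\<Sum>x\<in>F. wt q n (d x) / W + h (d x))" using pt FX by (intro sum_mono) auto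
  also have "\<dots> = (\<Sum>x\<in>F. wt q n (d x)) / W + (\<Sum>x\<in>F. h (d x))"
    by (simp add: sum.distrib sum_divide_distrib)
  also have "\<dots> \<le> L / W + (\<Sum>x\<in>X. h (d x))"
  proof (rule add_mono)
    show "(\<Sum>x\<in>F. wt q n (d x)) / W \<le> L / W" using L Wpos by (simp add: divide_right_mono)
    show "(\<Sum>x\<in>F. h (d x)) \<le> (\<Sum>x\<in>X. h (d x))" using X FX hnn by (intro sum_mono2) auto
  qed
  also have "(\<Sum>x\<in>X. h (d x)) = (\<Sum>k\<in>{..n}. \<Sum>x\<in>{x. x \<in> X \<and> d x = k}. h (d x))"
    using sum.group[OF X finite_atMost, where g=d and h="\<lambda>x. h (d x)"] dX by (auto simp: image_subset_iff)
  also have "\<dots> = (\<Sum>k\<in>{..n}. gauss_binom q n k * h k)"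
  proof (rule sum.cong[OF refl])
    fix k assume k: "k \<in> {..n}"
    have "(\<Sum>x\<in>{x. x \<in> X \<and> d x = k}. h (d x)) = (\<Sum>x\<in>{x. x \<in> X \<and> d x = k}. h k)"
      by (rule sum.cong) auto
    also have "\<dots> = real (card {x \<in> X. d x = k}) * h k" by simp
    finally show "(\<Sum>x\<in>{x. x \<in> X \<and> d x = k}. h (d x)) = gauss_binom q n k * h k"
      using cardk[of k] k by simp
  qed
  also have "\<dots> = (\<Sum>k\<in>{j0<..j0+e}. gauss_binom q n k * (1 - wt q n k / W))"
  proof -
    have "(\<Sum>k\<in>{..n}. gauss_binom q n k * h k) = (\<Sum>k\<in>{..n} \<inter> {j0<..j0+e}. gauss_binom q n k * (1 - wt q n k / W))"
    proof -
      have "(\<Sum>k\<in>{..n}. gauss_binom q n k * h k) = (\<Sum>k\<in>{..n}. if inM k then gauss_binom q n k * (1 - wt q n k / W) else 0)"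
        by (rule sum.cong) (auto simp: h_def)
      also have "\<dots> = (\<Sum>k\<in>{..n} \<inter> {k. inM k}. gauss_binom q n k * (1 - wt q n k / W))"
        by (simp add: sum.If_cases)
      also have "{..n} \<inter> {k. inM k} = {..n} \<inter> {j0<..j0+e}" by (auto simp: inM_def)
      finally show ?thesis .
    qed
    also have "{..n} \<inter> {j0<..j0+e} = {j0<..j0+e}" using e by (auto simp: j0_def)
    finally show ?thesis .
  qed
  also have "\<dots> = (\<Sum>k\<in>{j0<..j0+e}. gauss_binom q n k - real (n choose k) / W)"
  proof (rule sum.cong[OF refl])
    fix k assume "k \<in> {j0<..j0+e}"
    then have "k \<le> n" using e by (auto simp: j0_def)
    then have "gauss_binom q n k > 0" using gb_pos[OF q] by simp
    then show "gauss_binom q n k * (1 - wt q n k / W) = gauss_binom q n k - real (n choose k) / W"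
      by (simp add: wt_def field_simps)
  qed
  also have "\<dots> = (\<Sum>i=1..e. gauss_binom q n (j0 + i)) - (\<Sum>i=1..e. real (n choose (j0 + i))) / W"
  proof -
    have r: "{j0<..j0+e} = (\<lambda>i. j0 + i) ` {1..e}"
    proof
      show "{j0<..j0 + e} \<subseteq> (\<lambda>i. j0 + i) ` {1..e}"
      proof
        fix k assume "k \<in> {j0<..j0 + e}"
        then have "k = j0 + (k - j0)" "k - j0 \<in> {1..e}" by auto
        then show "k \<in> (\<lambda>i. j0 + i) ` {1..e}" by blast
      qed
    qed auto
    have "(\<Sum>k\<in>{j0<..j0+e}. gauss_binom q n k - real (n choose k) / W)
        = (\<Sum>i\<in>{1..e}. gauss_binom q n (j0 + i) - real (n choose (j0 + i)) / W)"
      unfolding r by (subst sum.reindex) (auto simp: inj_on_def)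
    then show ?thesis by (simp add: sum_subtractf sum_divide_distrib)
  qed
  finally show ?thesis by (simp add: j0_def W_def diff_divide_distrib)
qed



lemma binom_double:
  assumes "n \<le> 3 * k + 2"
  shows "real (n choose Suc k) \<le> 2 * real (n choose k)"
proof -
  have e1: "real (n choose Suc k) * real (Suc k) = real (n choose k) * (real n - real k)" by (rule binom_step)
  have "real n - real k \<le> 2 * real (Suc k)" using assms by simp
  then have "real (n choose k) * (real n - real k) \<le> real (n choose k) * (2 * real (Suc k))"
    by (intro mult_left_mono) auto
  then have "real (n choose Suc k) * real (Suc k) \<le> (2 * real (n choose k)) * real (Suc k)"
    using e1 by (simp add: algebra_simps)
  then show ?thesis by (simp add: mult_le_cancel_right)
qed

lemma binom_pow2:
  assumes "n \<le> 3 * j + 2"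
  shows "real (n choose (j + i)) \<le> 2 ^ i * real (n choose j)"
proof (induction i)
  case 0 then show ?case by simp
next
  case (Suc i)
  have "real (n choose Suc (j + i)) \<le> 2 * real (n choose (j + i))"
    using assms by (intro binom_double) simp
  also have "\<dots> \<le> 2 * (2 ^ i * real (n choose j))" using Suc by simp
  finally show ?case by simp
qed

lemma est:
  fixes q :: real
  assumes q: "1 < q" and e: "3 * e \<le> n"
  shows "(\<Sum>i=1..e. real (n choose ((n - e) div 2 + i))) / wt q n ((n - e) div 2)
       \<le> real e * 2 ^ e * (\<Sum>i=1..e. gauss_binom q n ((n - e) div 2 + i))"
proof (cases "e = 0")
  case True then show ?thesis by simp
next
  case False
  define j0 where "j0 = (n - e) div 2"
  have n3: "n \<le> 3 * j0 + 2" using e unfolding j0_def by presburger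
  have j0n: "2 * j0 + 1 \<le> n" using e False unfolding j0_def by presburger
  have bpos: "real (n choose j0) > 0" using j0n by simp
  have gpos: "gauss_binom q n j0 > 0" using gb_pos[OF q] j0n by simp
  have sb: "(\<Sum>i=1..e. real (n choose (j0 + i))) \<le> real e * 2 ^ e * real (n choose j0)"
  proof -
    have "(\<Sum>i=1..e. real (n choose (j0 + i))) \<le> (\<Sum>i=1..e. 2 ^ e * real (n choose j0))"
    proof (rule sum_mono)
      fix i assume i: "i \<in> {1..e}"
      have "real (n choose (j0 + i)) \<le> 2 ^ i * real (n choose j0)" using binom_pow2[OF n3] .
      also have "\<dots> \<le> 2 ^ e * real (n choose j0)"
        using i by (intro mult_right_mono power_increasing) auto
      finally show "real (n choose (j0 + i)) \<le> 2 ^ e * real (n choose j0)" .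
    qed
    then show ?thesis by simp
  qed
  have gstep: "gauss_binom q n j0 \<le> gauss_binom q n (j0 + 1)"
  proof -
    have s: "gauss_binom q n (Suc j0) * (q ^ (j0 + 1) - 1) = gauss_binom q n j0 * (q ^ (n - j0) - 1)"
      using gb_step[OF q] j0n by simp
    have "q ^ (j0 + 1) \<le> q ^ (n - j0)" using q j0n by (intro power_increasing) auto
    then have "gauss_binom q n j0 * (q ^ (j0 + 1) - 1) \<le> gauss_binom q n (Suc j0) * (q ^ (j0 + 1) - 1)"
      using s gpos by (simp add: mult_left_mono)
    moreover have "q ^ (j0 + 1) - 1 > 0" using q by simp
    ultimately show ?thesis by (simp add: mult_le_cancel_right)
  qed
  have gsum: "gauss_binom q n (j0 + 1) \<le> (\<Sum>i=1..e. gauss_binom q n (j0 + i))"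
  proof -
    have "(\<lambda>i. gauss_binom q n (j0 + i)) 1 \<le> (\<Sum>i\<in>{1..e}. gauss_binom q n (j0 + i))"
    proof (rule member_le_sum)
      show "1 \<in> {1..e}" using False by simp
      fix i assume "i \<in> {1..e} - {1}"
      then have "j0 + i \<le> n" using e by (auto simp: j0_def)
      then show "0 \<le> gauss_binom q n (j0 + i)" using gb_pos[OF q] by (simp add: less_imp_le)
    qed simp
    then show ?thesis by simp
  qed
  have "(\<Sum>i=1..e. real (n choose (j0 + i))) / wt q n j0
      = (\<Sum>i=1..e. real (n choose (j0 + i))) * gauss_binom q n j0 / real (n choose j0)"
    by (simp add: wt_def)
  also have "\<dots> \<le> real e * 2 ^ e * real (n choose j0) * gauss_binom q n j0 / real (n choose j0)"
    using sb gpos bpos by (intro divide_right_mono mult_right_mono) auto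
  also have "\<dots> = real e * 2 ^ e * gauss_binom q n j0" using bpos by simp
  also have "\<dots> \<le> real e * 2 ^ e * (\<Sum>i=1..e. gauss_binom q n (j0 + i))"
    using gstep gsum by (intro mult_left_mono) auto
  finally show ?thesis by (simp add: j0_def)
qed



lemma weighted_real:
  fixes F :: "(nat \<Rightarrow> 'f::{field,finite}) set set" and P :: "'p::order set"
  assumes F: "F \<subseteq> subspaces n" "P_free P F"
  shows "(\<Sum>V\<in>F. wt (real (card (UNIV::'f set))) n (sdim V)) \<le> real (La P n)"
proof -
  define q where "q = card (UNIV::'f set)"
  define cB where "cB = card (Bset n :: (nat \<Rightarrow> nat \<Rightarrow> 'f) set)"
  have cBpos: "real cB > 0" using card_Bset_pos[of n, where 'f='f] by (simp add: cB_def)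
  have q1: "1 < real q" using card_field_ge2[where 'f='f] by (simp add: q_def)
  have key: "real ((n choose sdim V) * Nk q n (sdim V)) = real cB * wt (real q) n (sdim V)"
    if V: "V \<in> F" for V
  proof -
    define k where "k = sdim V"
    have kn: "k \<le> n" using sdim_le[of V n] V F(1) by (auto simp: k_def)
    have m: "card (Lev n k :: (nat \<Rightarrow> 'f) set set) * Nk q n k = cB"
      using card_Lev_mul[OF kn, where 'f='f] by (simp add: Nk_def q_def cB_def)
    have g: "real (card (Lev n k :: (nat \<Rightarrow> 'f) set set)) = gauss_binom (real q) n k"
      using card_Lev[OF kn, where 'f='f] by (simp add: q_def)
    have gpos: "gauss_binom (real q) n k > 0" using gb_pos[OF q1 kn] .
    have "gauss_binom (real q) n k * real (Nk q n k) = real cB"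
      using m g by (metis of_nat_mult)
    then have "real (Nk q n k) = real cB / gauss_binom (real q) n k"
      using gpos by (simp add: field_simps)
    then show ?thesis by (simp add: k_def wt_def)
  qed
  have "real ((\<Sum>V\<in>F. (n choose sdim V) * Nk q n (sdim V))) \<le> real (cB * La P n)"
    unfolding of_nat_le_iff q_def cB_def by (rule weighted_nat[OF F])
  then have "(\<Sum>V\<in>F. real cB * wt (real q) n (sdim V)) \<le> real cB * real (La P n)"
    using key by (simp add: of_nat_sum)
  then have "real cB * (\<Sum>V\<in>F. wt (real q) n (sdim V)) \<le> real cB * real (La P n)"
    by (simp add: sum_distrib_left)
  then show ?thesis using cBpos by (simp add: q_def)
qed

lemma card_bound_F:
  fixes F :: "(nat \<Rightarrow> 'f::{field,finite}) set set" and P :: "'p::order set"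
  assumes F: "F \<subseteq> subspaces n" "P_free P F" and e: "e \<le> n"
  shows "real (card F) \<le> (\<Sum>i=1..e. gauss_binom (real (card (UNIV::'f set))) n ((n - e) div 2 + i))
     + (real (La P n) - (\<Sum>i=1..e. real (n choose ((n - e) div 2 + i))))
       / wt (real (card (UNIV::'f set))) n ((n - e) div 2)"
proof (rule lp_bound[where X="subspaces n" and d=sdim])
  show "1 < real (card (UNIV::'f set))" using card_field_ge2[where 'f='f] by simp
  show "finite (subspaces n :: (nat \<Rightarrow> 'f) set set)" by (rule finite_subspaces)
  show "\<And>x. x \<in> (subspaces n :: (nat \<Rightarrow> 'f) set set) \<Longrightarrow> sdim x \<le> n" by (rule sdim_le)
  show "\<And>k. k \<le> n \<Longrightarrow> real (card {x \<in> (subspaces n :: (nat \<Rightarrow> 'f) set set). sdim x = k})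
      = gauss_binom (real (card (UNIV::'f set))) n k"
    using card_Lev[where 'f='f] by (simp add: Lev_def)
  show "(\<Sum>x\<in>F. wt (real (card (UNIV::'f set))) n (sdim x)) \<le> real (La P n)"
    by (rule weighted_real[OF F])
qed (use F e in auto)

lemma P_free_empty: "P \<noteq> {} \<Longrightarrow> P_free P {}"
  by (auto simp: P_free_def weakly_contains_def)

lemma La_q_in:
  fixes P :: "'p::order set"
  assumes "P \<noteq> {}"
  shows "\<exists>F. F \<subseteq> (subspaces n :: (nat \<Rightarrow> 'f::{field,finite}) set set) \<and> P_free P F
             \<and> La_q P n TYPE('f) = card F"
    and "\<And>F. F \<subseteq> (subspaces n :: (nat \<Rightarrow> 'f) set set) \<Longrightarrow> P_free P F \<Longrightarrow> card F \<le> La_q P n TYPE('f)"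
proof -
  define A where "A = {card F | F. F \<subseteq> (subspaces n :: (nat \<Rightarrow> 'f) set set) \<and> P_free P F}"
  have finA: "finite A"
  proof -
    have "A \<subseteq> card ` Pow (subspaces n :: (nat \<Rightarrow> 'f) set set)" by (auto simp: A_def)
    then show ?thesis using finite_subspaces finite_subset by blast
  qed
  have neA: "A \<noteq> {}" using P_free_empty[OF assms] by (auto simp: A_def)
  have "La_q P n TYPE('f) = Max A" by (simp add: La_q_def A_def)
  then have "La_q P n TYPE('f) \<in> A" using Max_in[OF finA neA] by simp
  then show "\<exists>F. F \<subseteq> (subspaces n :: (nat \<Rightarrow> 'f::{field,finite}) set set) \<and> P_free P F
             \<and> La_q P n TYPE('f) = card F" by (auto simp: A_def)
  fix F :: "(nat \<Rightarrow> 'f) set set" assume "F \<subseteq> subspaces n" "P_free P F"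
  then have "card F \<in> A" by (auto simp: A_def)
  then show "card F \<le> La_q P n TYPE('f)" using Max_ge[OF finA] \<open>La_q P n TYPE('f) = Max A\<close> by simp
qed



lemma int_div_eq: "e \<le> n \<Longrightarrow> (int n - int e) div 2 = int ((n - e) div 2)"
  by (simp add: zdiv_int of_nat_diff)

lemma Sigma_q_eq: assumes e: "e \<le> n" shows "Sigma_q q n e = (\<Sum>i=1..e. gauss_binom q n ((n - e) div 2 + i))"
  unfolding Sigma_q_def Let_def int_div_eq[OF e]
  by (intro sum.cong refl) (simp add: nat_add_distrib)

lemma Sigma_b_eq: assumes e: "e \<le> n" shows "Sigma_b n e = (\<Sum>i=1..e. real (n choose ((n - e) div 2 + i)))"
  unfolding Sigma_b_def Let_def int_div_eq[OF e]
  by (intro sum.cong refl) (simp add: nat_add_distrib)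

lemma sum_shift_ivl: "(\<Sum>k\<in>{j<..j+e}. f k) = (\<Sum>i=1..e. f (j + i))"
  for f :: "nat \<Rightarrow> 'a::comm_monoid_add"
proof -
  have r: "{j<..j+e} = (\<lambda>i. j + i) ` {1..e}"
  proof
    show "{j<..j + e} \<subseteq> (\<lambda>i. j + i) ` {1..e}"
    proof
      fix k assume "k \<in> {j<..j + e}"
      then have "k = j + (k - j)" "k - j \<in> {1..e}" by auto
      then show "k \<in> (\<lambda>i. j + i) ` {1..e}" by blast
    qed
  qed auto
  show ?thesis unfolding r by (subst sum.reindex) (auto simp: inj_on_def)
qed

lemma card_mid_levels:
  assumes e: "e \<le> n"
  shows "real (card (mid_levels n e :: (nat \<Rightarrow> 'f::{field,finite}) set set))
       = Sigma_q (real (card (UNIV::'f set))) n e"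
proof -
  define j0 where "j0 = (n - e) div 2"
  have eq: "(mid_levels n e :: (nat \<Rightarrow> 'f) set set) = (\<Union>k\<in>{j0<..j0+e}. Lev n k)"
    unfolding mid_levels_def Lev_def int_div_eq[OF e] j0_def[symmetric] by auto
  have fin: "finite (Lev n k :: (nat \<Rightarrow> 'f) set set)" for k
    using finite_subspaces[of n, where 'f='f] by (simp add: Lev_def)
  have "card (mid_levels n e :: (nat \<Rightarrow> 'f) set set) = (\<Sum>k\<in>{j0<..j0+e}. card (Lev n k :: (nat \<Rightarrow> 'f) set set))"
    unfolding eq apply (rule card_UN_disjoint) apply simp using fin apply blast by (auto simp: Lev_def)
  then have "real (card (mid_levels n e :: (nat \<Rightarrow> 'f) set set))
      = (\<Sum>k\<in>{j0<..j0+e}. real (card (Lev n k :: (nat \<Rightarrow> 'f) set set)))" by (simp add: of_nat_sum)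
  also have "\<dots> = (\<Sum>k\<in>{j0<..j0+e}. gauss_binom (real (card (UNIV::'f set))) n k)"
  proof (rule sum.cong[OF refl])
    fix k assume "k \<in> {j0<..j0+e}"
    then have "k \<le> n" using e by (auto simp: j0_def)
    then show "real (card (Lev n k :: (nat \<Rightarrow> 'f) set set)) = gauss_binom (real (card (UNIV::'f set))) n k"
      by (rule card_Lev)
  qed
  also have "\<dots> = Sigma_q (real (card (UNIV::'f set))) n e"
    unfolding sum_shift_ivl Sigma_q_eq[OF e] j0_def ..
  finally show ?thesis .
qed

lemma mid_levels_contains:
  fixes P :: "'p::order set"
  assumes P: "finite P" "P \<noteq> {}" and m: "card P \<le> m"
  shows "weakly_contains P (mid_levels m m :: (nat \<Rightarrow> 'f::{field,finite}) set set)"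
proof -
  obtain h where h: "bij_betw h P {0..<card P}" using ex_bij_betw_finite_nat[OF P(1)] by blast
  have hinj: "inj_on h P" and hP: "h ` P = {0..<card P}" using h by (auto simp: bij_betw_def)
  define dn where "dn = (\<lambda>x. {y \<in> P. y \<le> x})"
  define f where "f = (\<lambda>x. h ` dn x)"
  define G where "G = f ` P"
  obtain b where b: "b \<in> (Bset m :: (nat \<Rightarrow> nat \<Rightarrow> 'f) set)"
    using card_Bset_pos[of m, where 'f='f] by (metis card.empty ex_in_conv less_irrefl)
  have hlt: "h y < m" if "y \<in> P" for y
  proof -
    have "h y \<in> h ` P" using that by blast
    then show ?thesis using hP m by auto
  qed
  have fsub: "f x \<subseteq> {..<m}" for x using hlt by (auto simp: f_def dn_def)
  have wc: "weakly_contains P G"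
    unfolding weakly_contains_def
  proof (intro exI[of _ f] conjI)
    show "inj_on f P"
    proof
      fix x y assume xy: "x \<in> P" "y \<in> P" and eq: "f x = f y"
      have "dn x = dn y" using eq hinj inj_on_image_eq_iff[of h P "dn x" "dn y"]
        by (auto simp: f_def dn_def)
      then have "x \<le> y" "y \<le> x" using xy by (auto simp: dn_def)
      then show "x = y" by simp
    qed
    show "f ` P \<subseteq> G" by (simp add: G_def)
    show "\<forall>x\<in>P. \<forall>y\<in>P. x < y \<longrightarrow> f x \<subset> f y"
    proof (intro ballI impI)
      fix x y assume xy: "x \<in> P" "y \<in> P" "x < y"
      have "dn x \<subseteq> dn y" using xy by (auto simp: dn_def)
      moreover have "y \<in> dn y" "y \<notin> dn x" using xy by (auto simp: dn_def)
      ultimately have sub: "h ` dn x \<subseteq> h ` dn y" "h y \<in> h ` dn y" by auto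
      have "h y \<notin> h ` dn x"
      proof
        assume "h y \<in> h ` dn x"
        then obtain z where z: "z \<in> dn x" "h z = h y" by auto
        then have "z = y" using hinj xy(2) by (auto simp: dn_def inj_on_def)
        then show False using z \<open>y \<notin> dn x\<close> by simp
      qed
      then show "f x \<subset> f y" unfolding f_def using sub by blast
    qed
  qed
  have Gsub: "G \<subseteq> Pow {..<m}" using fsub by (auto simp: G_def)
  have img: "phi b ` G \<subseteq> mid_levels m m"
  proof
    fix V assume "V \<in> phi b ` G"
    then obtain x where x: "x \<in> P" "V = phi b (f x)" by (auto simp: G_def)
    have V1: "V \<in> subspaces m" "sdim V = card (f x)" using Bset_props(4,5)[OF b fsub] x by auto
    have "x \<in> dn x" using x by (simp add: dn_def)
    then have "f x \<noteq> {}" by (auto simp: f_def)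
    moreover have "finite (f x)" using fsub finite_subset by blast
    ultimately have "card (f x) \<ge> 1" by (simp add: Suc_le_eq card_gt_0_iff)
    moreover have "card (f x) \<le> m" using card_mono[OF _ fsub[of x]] by simp
    ultimately show "V \<in> mid_levels m m" using V1 by (simp add: mid_levels_def)
  qed
  show ?thesis by (rule weakly_contains_transfer[OF b Gsub wc img])
qed

lemma eqP_free:
  fixes P :: "'p::order set"
  assumes P: "finite P" "P \<noteq> {}"
  shows "P_free P (mid_levels n (eqP P TYPE('f)) :: (nat \<Rightarrow> 'f::{field,finite}) set set)"
proof -
  define Q where "Q = (\<lambda>m. \<forall>n. P_free P (mid_levels n m :: (nat \<Rightarrow> 'f) set set))"
  have Q0: "Q 0"
  proof -
    have "(mid_levels n 0 :: (nat \<Rightarrow> 'f) set set) = {}" for n by (auto simp: mid_levels_def)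
    then show ?thesis using P_free_empty[OF P(2)] by (simp add: Q_def)
  qed
  have bound: "\<forall>m. Q m \<longrightarrow> m \<le> card P"
  proof (intro allI impI)
    fix m assume "Q m"
    show "m \<le> card P"
    proof (rule ccontr)
      assume "\<not> m \<le> card P"
      then have "card P \<le> m" by simp
      then have "weakly_contains P (mid_levels m m :: (nat \<Rightarrow> 'f) set set)"
        by (rule mid_levels_contains[OF P])
      then show False using \<open>Q m\<close> by (simp add: Q_def P_free_def)
    qed
  qed
  have "Q (Greatest Q)" using GreatestI_nat[of Q 0 "card P"] Q0 bound by blast
  moreover have "eqP P TYPE('f) = Greatest Q" by (simp add: eqP_def Q_def)
  ultimately show ?thesis by (simp add: Q_def)
qed



lemma Sigma_b_nonneg: "0 \<le> Sigma_b n e"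
  unfolding Sigma_b_def Let_def by (intro sum_nonneg) auto

lemma La_eventually:
  assumes h: "(\<lambda>n. real (La P n)) \<sim>[at_top] (\<lambda>n. Sigma_b n e)" and d: "0 < d"
  shows "eventually (\<lambda>n. real (La P n) \<le> (1 + d) * Sigma_b n e) at_top"
proof -
  define r where "r = (\<lambda>n. if real (La P n) = 0 \<and> Sigma_b n e = 0 then 1 else real (La P n) / Sigma_b n e)"
  have "(r \<longlongrightarrow> 1) at_top" using asymp_equivD[OF h] by (simp add: r_def)
  moreover have "0 < min d (1/2)" using d by simp
  ultimately have ev: "eventually (\<lambda>n. dist (r n) 1 < min d (1/2)) at_top" by (rule tendstoD)
  show ?thesis
  proof (rule eventually_mono[OF ev])
    fix n assume dn: "dist (r n) 1 < min d (1/2)"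
    have Sb0: "0 \<le> Sigma_b n e" by (rule Sigma_b_nonneg)
    show "real (La P n) \<le> (1 + d) * Sigma_b n e"
    proof (cases "real (La P n) = 0")
      case True
      then show ?thesis using Sb0 d by simp
    next
      case False
      then have rn: "r n = real (La P n) / Sigma_b n e" by (simp add: r_def)
      show ?thesis
      proof (cases "Sigma_b n e = 0")
        case True
        then have "r n = 0" using rn by simp
        then show ?thesis using dn by (simp add: dist_real_def)
      next
        case False
        then have pos: "Sigma_b n e > 0" using Sb0 by simp
        have "real (La P n) / Sigma_b n e < 1 + d" using dn rn by (simp add: dist_real_def abs_less_iff)
        then show ?thesis using pos by (simp add: divide_less_eq less_imp_le)
      qed
    qed
  qed
qed

theorem corollary1p5:
  fixes P :: "'p::order set"
  assumes "finite P" and "P \<noteq> {}"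
    and "(\<lambda>n. real (La P n)) \<sim>[at_top] (\<lambda>n. Sigma_b n (eP P))"
    and "eqP P TYPE('f::{field,finite}) = eP P"
  shows "(\<lambda>n. real (La_q P n TYPE('f))) \<sim>[at_top]
           (\<lambda>n. Sigma_q (real (card (UNIV :: 'f set))) n (eqP P TYPE('f)))"
proof -
  define q where "q = real (card (UNIV :: 'f set))"
  define e where "e = eP P"
  have eqe: "eqP P TYPE('f) = e" using assms(4) by (simp add: e_def)
  have q1: "1 < q" using card_field_ge2[where 'f='f] by (simp add: q_def)
  define C where "C = real e * 2 ^ e"
  have C0: "0 \<le> C" by (simp add: C_def)
  have lower: "Sigma_q q n e \<le> real (La_q P n TYPE('f))" and Sq0: "0 \<le> Sigma_q q n e"
    if n: "e \<le> n" for n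
  proof -
    have free: "P_free P (mid_levels n e :: (nat \<Rightarrow> 'f) set set)"
      using eqP_free[OF assms(1,2), of n, where 'f='f] eqe by simp
    have sub: "(mid_levels n e :: (nat \<Rightarrow> 'f) set set) \<subseteq> subspaces n" by (auto simp: mid_levels_def)
    have "card (mid_levels n e :: (nat \<Rightarrow> 'f) set set) \<le> La_q P n TYPE('f)"
      by (rule La_q_in(2)[OF assms(2) sub free])
    then show "Sigma_q q n e \<le> real (La_q P n TYPE('f))"
      using card_mid_levels[OF n, where 'f='f] by (simp add: q_def)
    show "0 \<le> Sigma_q q n e" using card_mid_levels[OF n, where 'f='f] by (simp add: q_def)
  qed
  have upper: "real (La_q P n TYPE('f)) \<le> Sigma_q q n e + d * C * Sigma_q q n e"
    if n: "3 * e \<le> n" and d: "0 \<le> d" and La: "real (La P n) \<le> (1 + d) * Sigma_b n e" for n d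
  proof -
    have en: "e \<le> n" using n by simp
    obtain F where F: "F \<subseteq> (subspaces n :: (nat \<Rightarrow> 'f) set set)" "P_free P F"
      "La_q P n TYPE('f) = card F" using La_q_in(1)[OF assms(2), of n, where 'f='f] by blast
    define W where "W = wt q n ((n - e) div 2)"
    have Wpos: "W > 0" unfolding W_def using wt_pos[OF q1, of "(n - e) div 2" n] en by simp
    have "real (card F) \<le> Sigma_q q n e + (real (La P n) - Sigma_b n e) / W"
      using card_bound_F[OF F(1,2) en] Sigma_q_eq[OF en, of q] Sigma_b_eq[OF en]
      by (simp add: q_def W_def)
    also have "(real (La P n) - Sigma_b n e) / W \<le> (d * Sigma_b n e) / W"
      using La Wpos by (intro divide_right_mono) (auto simp: algebra_simps)
    also have "\<dots> = d * (Sigma_b n e / W)" by simp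
    also have "Sigma_b n e / W \<le> C * Sigma_q q n e"
      using est[OF q1 n] Sigma_q_eq[OF en, of q] Sigma_b_eq[OF en] by (simp add: W_def C_def)
    finally have "real (card F) \<le> Sigma_q q n e + d * (C * Sigma_q q n e)"
      using d by (simp add: mult_left_mono)
    then show ?thesis using F(3) by (simp add: mult.assoc)
  qed
  show ?thesis
    unfolding eqe q_def[symmetric]
  proof (rule asymp_equivI, rule tendstoI)
    fix eps :: real assume eps: "0 < eps"
    define d where "d = eps / (2 * (C + 1))"
    have dpos: "0 < d" using eps C0 by (simp add: d_def)
    have dC: "d * C < eps"
    proof -
      have "d * C = eps * (C / (2 * (C + 1)))" by (simp add: d_def)
      also have "C / (2 * (C + 1)) < 1" using C0 by (simp add: divide_less_eq)
      then have "eps * (C / (2 * (C + 1))) < eps * 1" using eps by (intro mult_strict_left_mono)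
      finally show ?thesis by simp
    qed
    have ev: "eventually (\<lambda>n. real (La P n) \<le> (1 + d) * Sigma_b n e \<and> 3 * e \<le> n) at_top"
      using La_eventually[OF assms(3)[folded e_def] dpos] eventually_ge_at_top[of "3 * e"]
      by (rule eventually_conj)
    show "eventually (\<lambda>n. dist (if real (La_q P n TYPE('f)) = 0 \<and> Sigma_q q n e = 0 then 1
                else real (La_q P n TYPE('f)) / Sigma_q q n e) 1 < eps) at_top"
    proof (rule eventually_mono[OF ev])
      fix n assume h: "real (La P n) \<le> (1 + d) * Sigma_b n e \<and> 3 * e \<le> n"
      have lo: "Sigma_q q n e \<le> real (La_q P n TYPE('f))" and s0: "0 \<le> Sigma_q q n e"
        using lower[of n] Sq0[of n] h by auto
      have up: "real (La_q P n TYPE('f)) \<le> Sigma_q q n e + d * C * Sigma_q q n e"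
        using upper[of n d] h dpos by simp
      show "dist (if real (La_q P n TYPE('f)) = 0 \<and> Sigma_q q n e = 0 then 1
                else real (La_q P n TYPE('f)) / Sigma_q q n e) 1 < eps"
      proof (cases "Sigma_q q n e = 0")
        case True
        then have "real (La_q P n TYPE('f)) = 0" using up lo by simp
        then show ?thesis using True eps by simp
      next
        case False
        then have sp: "Sigma_q q n e > 0" using s0 by simp
        have r1: "1 \<le> real (La_q P n TYPE('f)) / Sigma_q q n e" using lo sp by simp
        have r2: "real (La_q P n TYPE('f)) / Sigma_q q n e \<le> 1 + d * C"
          using up sp by (simp add: divide_le_eq algebra_simps)
        have "dist (real (La_q P n TYPE('f)) / Sigma_q q n e) 1 < eps"
          using r1 r2 dC by (simp add: dist_real_def abs_le_iff)
        then show ?thesis using False by simp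
      qed
    qed
  qed
qed

end
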